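(* Let $0<p<\frac12$, $\varepsilon=\frac12-p$, and let $k\ge1$. Suppose a fixed comparison query is asked $k$ times, each answer being independently correct with probability $1-p$ and the opposite with probability $p$; let $X$ be the number of "$<$" answers and $Y=k-X$ the number of "$>$" answers, and let $$R=\frac{(1-p)^Xp^Y+(1-p)^Yp^X}{2}.$$ Then for every constant $c>0$ there is a constant $C'$ such that whenever $k\le c\,\varepsilon^{-2}$, $$\mathbb{E}[R]\le\frac{1}{2^k}\left(1+C'\varepsilon^4k^2\right).$$ Equivalently, for an epoch of length $k=\mathcal{O}(\varepsilon^{-2})$ starting at step $\tau$, the coupled process satisfies $\mathbb{E}[W_{\tau+k}]\le 2^{-k}(1+\mathcal{O}(\varepsilon^4k^2))W_\tau$, where $W_{\tau+k}=W_\tau\cdot R$.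
   Context: Binary search with comparison queries on a linear order: querying $q$, the correct answer is "$<$" if the target is smaller than $q$ and "$>$" otherwise. The coupled process $W$ is updated at the end of an epoch (a block of $k$ repeated queries to the same element) starting at step $\tau$ by $W_{\tau+k}=W_\tau\frac{(1-p)^Xp^Y+(1-p)^Yp^X}{2}$, with $X,Y$ the numbers of "$<$" and "$>$" answers in the epoch. *)

theory Defs
  imports "HOL-Probability.Probability"
begin

definition epoch_R :: "real \<Rightarrow> nat \<Rightarrow> nat \<Rightarrow> real" where
  "epoch_R p k X = ((1 - p) ^ X * p ^ (k - X) + (1 - p) ^ (k - X) * p ^ X) / 2"

text \<open>Distribution of X: each of the k independent answers is "<" with probability
  1 - p if the target is smaller than the queried element (correct answer "<"),
  and with probability p otherwise.\<close>
definition answers_less_dist :: "real \<Rightarrow> nat \<Rightarrow> bool \<Rightarrow> nat pmf" where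
  "answers_less_dist p k target_smaller =
     binomial_pmf k (if target_smaller then 1 - p else p)"

end

theory Submission
  imports Defs
begin

lemma exp_binom_gen:
  fixes r x y :: real
  assumes "0 \<le> r" "r \<le> 1"
  shows "measure_pmf.expectation (binomial_pmf k r) (\<lambda>X. x ^ X * y ^ (k - X))
         = (r * x + (1 - r) * y) ^ k"
proof -
  have "measure_pmf.expectation (binomial_pmf k r) (\<lambda>X. x ^ X * y ^ (k - X))
     = (\<Sum>j\<le>k. (real (k choose j) * r ^ j * (1 - r) ^ (k - j)) * (x ^ j * y ^ (k - j)))"
    using assms by (subst expectation_binomial_pmf') auto
  also have "\<dots> = (\<Sum>j\<le>k. real (k choose j) * (r * x) ^ j * ((1 - r) * y) ^ (k - j))"
    by (intro sum.cong refl) (simp add: power_mult_distrib mult_ac)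
  also have "\<dots> = (r * x + (1 - r) * y) ^ k"
    by (subst binomial_ring) simp
  finally show ?thesis .
qed

lemma exp_R:
  assumes "0 < p" "p < 1"
  shows "measure_pmf.expectation (answers_less_dist p k b) (\<lambda>X. epoch_R p k X)
     = (((1 - p)^2 + p^2) ^ k + (2 * p * (1 - p)) ^ k) / 2"
proof -
  define r where "r = (if b then 1 - p else p)"
  have r: "0 \<le> r" "r \<le> 1" using assms by (auto simp: r_def)
  have e1: "measure_pmf.expectation (binomial_pmf k r) (\<lambda>X. (1-p) ^ X * p ^ (k - X))
         = (r * (1-p) + (1 - r) * p) ^ k" by (rule exp_binom_gen[OF r])
  have e2: "measure_pmf.expectation (binomial_pmf k r) (\<lambda>X. p ^ X * (1-p) ^ (k - X))
         = (r * p + (1 - r) * (1-p)) ^ k" by (rule exp_binom_gen[OF r])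
  have int: "integrable (measure_pmf (binomial_pmf k r)) f" for f :: "nat \<Rightarrow> real"
    using r by (intro integrable_measure_pmf_finite) auto
  have "measure_pmf.expectation (answers_less_dist p k b) (\<lambda>X. epoch_R p k X)
     = (measure_pmf.expectation (binomial_pmf k r) (\<lambda>X. (1-p) ^ X * p ^ (k - X))
       + measure_pmf.expectation (binomial_pmf k r) (\<lambda>X. p ^ X * (1-p) ^ (k - X))) / 2"
    unfolding answers_less_dist_def epoch_R_def r_def[symmetric]
    by (subst Bochner_Integration.integral_add[symmetric]) (auto simp: int mult_ac)
  also have "\<dots> = (((1 - p)^2 + p^2) ^ k + (2 * p * (1 - p)) ^ k) / 2"
    unfolding e1 e2 by (auto simp: r_def power2_eq_square algebra_simps)
  finally show ?thesis .
qed

lemma diff_bound: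
  fixes a :: real
  assumes "0 \<le> a" "a \<le> 1"
  shows "(1 + a) ^ k - (1 - a) ^ k \<le> 2 * k * a * (1 + a) ^ k"
proof (induction k)
  case 0 then show ?case by simp
next
  case (Suc k)
  have v: "(1 - a) ^ k \<le> (1 + a) ^ k" using assms by (intro power_mono) auto
  have "(1 + a) ^ Suc k - (1 - a) ^ Suc k = (1 + a) * ((1 + a) ^ k - (1 - a) ^ k) + 2 * a * (1 - a) ^ k"
    by (simp add: algebra_simps)
  also have "\<dots> \<le> (1 + a) * (2 * k * a * (1 + a) ^ k) + 2 * a * ((1 + a) * (1 + a) ^ k)"
  proof (intro add_mono mult_left_mono)
    show "(1 - a) ^ k \<le> (1 + a) * (1 + a) ^ k"
      using v assms by (smt (verit) mult_le_cancel_right1 zero_le_power)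
  qed (use Suc assms in auto)
  also have "\<dots> = 2 * real (Suc k) * a * (1 + a) ^ Suc k" by (simp add: algebra_simps)
  finally show ?case .
qed

lemma sum_bound:
  fixes a :: real
  assumes "0 \<le> a" "a \<le> 1"
  shows "(1 + a) ^ k + (1 - a) ^ k \<le> 2 + (real k)^2 * a^2 * (1 + a) ^ k"
proof (induction k)
  case 0 then show ?case by simp
next
  case (Suc k)
  define u where "u = (1 + a) ^ k"
  define v where "v = (1 - a) ^ k"
  have u0: "0 \<le> u" using assms by (simp add: u_def)
  have d: "u - v \<le> 2 * k * a * u" using diff_bound[OF assms, of k] by (simp add: u_def v_def)
  have ih: "u + v \<le> 2 + (real k)^2 * a^2 * u" using Suc by (simp add: u_def v_def)
  have "(1 + a) ^ Suc k + (1 - a) ^ Suc k = u + v + a * (u - v)"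
    by (simp add: u_def v_def algebra_simps)
  also have "\<dots> \<le> 2 + (real k)^2 * a^2 * u + a * (2 * k * a * u)"
    using ih d assms by (smt (verit) mult_left_mono)
  also have "\<dots> \<le> 2 + (real (Suc k))^2 * a^2 * ((1 + a) * u)"
  proof -
    have "(real k)^2 * a^2 * u + a * (2 * k * a * u) \<le> (real (Suc k))^2 * a^2 * u"
      using u0 assms by (simp add: power2_eq_square algebra_simps mult_nonneg_nonneg)
    also have "\<dots> \<le> (real (Suc k))^2 * a^2 * ((1 + a) * u)"
      using u0 assms by (intro mult_left_mono) (auto simp: algebra_simps)
    finally show ?thesis by simp
  qed
  also have "\<dots> = 2 + (real (Suc k))^2 * a^2 * (1 + a) ^ Suc k" by (simp add: u_def)
  finally show ?case .
qed

theorem lemma9: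
  fixes c :: real
  assumes "c > 0"
  shows "\<exists>C' :: real. \<forall>(p :: real) (k :: nat) (target_smaller :: bool).
           0 < p \<and> p < 1/2 \<and> k \<ge> 1 \<and> real k \<le> c / (1/2 - p) ^ 2 \<longrightarrow>
           measure_pmf.expectation (answers_less_dist p k target_smaller) (\<lambda>X. epoch_R p k X)
             \<le> (1 / 2 ^ k) * (1 + C' * (1/2 - p) ^ 4 * (real k) ^ 2)"
proof (intro exI allI impI)
  fix p :: real and k :: nat and b :: bool
  assume H: "0 < p \<and> p < 1/2 \<and> k \<ge> 1 \<and> real k \<le> c / (1/2 - p) ^ 2"
  define e where "e = 1/2 - p"
  define a where "a = 4 * e^2"
  have e: "0 < e" "e < 1/2" using H by (auto simp: e_def)
  have "(2*e)*(2*e) \<le> 1*1" using e by (intro mult_mono) auto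
  then have a: "0 \<le> a" "a \<le> 1" using e by (auto simp: a_def power2_eq_square)
  have ka: "real k * a \<le> 4 * c"
  proof -
    have "real k \<le> c / e^2" using H by (simp add: e_def)
    then have "real k * e^2 \<le> c / e^2 * e^2" using e by (intro mult_right_mono) auto
    then have "real k * e^2 \<le> c" using e by simp
    then show ?thesis by (simp add: a_def)
  qed
  have eq: "(((1 - p)^2 + p^2) ^ k + (2 * p * (1 - p)) ^ k) / 2
          = (1 / 2 ^ k) * (((1 + a) ^ k + (1 - a) ^ k) / 2)"
  proof -
    have h1: "(1 - p)^2 + p^2 = (1 + a) / 2" and h2: "2 * p * (1 - p) = (1 - a) / 2"
      by (simp_all add: a_def e_def power2_eq_square algebra_simps)
    show ?thesis unfolding h1 h2 power_divide by (simp add: field_simps)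
  qed
  have pw: "(1 + a) ^ k \<le> exp (4 * c)"
  proof -
    have "(1 + a) ^ k \<le> exp a ^ k" using a
      by (intro power_mono) (auto simp: add.commute exp_ge_add_one_self_aux)
    also have "\<dots> = exp (real k * a)" by (simp add: exp_of_nat_mult)
    also have "\<dots> \<le> exp (4 * c)" using ka by simp
    finally show ?thesis .
  qed
  have "((1 + a) ^ k + (1 - a) ^ k) / 2 \<le> 1 + (real k)^2 * a^2 * (1 + a) ^ k / 2"
    using sum_bound[OF a, of k] by simp
  also have "\<dots> \<le> 1 + (8 * exp (4 * c)) * e ^ 4 * (real k)^2"
  proof -
    have "(real k)^2 * a^2 * (1 + a) ^ k / 2 = 8 * e^4 * (real k)^2 * (1 + a) ^ k"
      by (simp add: a_def power2_eq_square power4_eq_xxxx)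
    also have "\<dots> \<le> 8 * e^4 * (real k)^2 * exp (4 * c)"
      using pw by (intro mult_left_mono) auto
    finally show ?thesis by (simp add: mult_ac)
  qed
  finally have b: "((1 + a) ^ k + (1 - a) ^ k) / 2 \<le> 1 + (8 * exp (4 * c)) * e ^ 4 * (real k)^2" .
  show "measure_pmf.expectation (answers_less_dist p k b) (\<lambda>X. epoch_R p k X)
             \<le> (1 / 2 ^ k) * (1 + (8 * exp (4 * c)) * (1/2 - p) ^ 4 * (real k) ^ 2)"
  proof -
    have "measure_pmf.expectation (answers_less_dist p k b) (\<lambda>X. epoch_R p k X)
        = (1 / 2 ^ k) * (((1 + a) ^ k + (1 - a) ^ k) / 2)"
      using exp_R[of p k b] eq H by simp
    also have "\<dots> \<le> (1 / 2 ^ k) * (1 + (8 * exp (4 * c)) * e ^ 4 * (real k)^2)"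
      using b by (intro mult_left_mono) auto
    finally show ?thesis by (simp add: e_def)
  qed
qed

end
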